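(* Let $\lambda$ be a nonzero real number. For every integer $n\ge0$, \[ \int_{0}^{\infty}e^{-2x}\,\mathrm{bel}_{n,\lambda}(-x)\,dx=\frac{\beta_{n+1,\lambda}-2^{n+1}\beta_{n+1,\frac{\lambda}{2}}}{n+1}. \]
   Context: For nonzero real $\lambda$, $e_\lambda(t)=(1+\lambda t)^{1/\lambda}$. The partially degenerate Bell polynomials $\mathrm{bel}_{n,\lambda}(x)$ are defined by $e^{x(e_{\lambda}(t)-1)}=\sum_{n=0}^{\infty}\mathrm{bel}_{n,\lambda}(x)\frac{t^{n}}{n!}$. The degenerate Bernoulli numbers $\beta_{n,\mu}$ (for nonzero real $\mu$) are defined by $\frac{t}{e_{\mu}(t)-1}=\sum_{n=0}^{\infty}\beta_{n,\mu}\frac{t^{n}}{n!}$, with $e_\mu(t)=(1+\mu t)^{1/\mu}$; here $\mu=\lambda$ or $\mu=\lambda/2$. *)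

theory Defs
  imports "HOL-Analysis.Analysis" "HOL-Computational_Algebra.Formal_Power_Series"
begin

text \<open>Degenerate exponential e_lambda(t) = (1 + lambda t)^(1/lambda), as a formal power series
  in t: the binomial series (1+X)^(1/lambda) composed with lambda X.\<close>
definition deg_exp_fps :: "real \<Rightarrow> real fps" where
  "deg_exp_fps l = fps_binomial (1 / l) oo (fps_const l * fps_X)"

definition deg_bell :: "nat \<Rightarrow> real \<Rightarrow> real \<Rightarrow> real" where
  "deg_bell n l x = fact n * fps_nth (fps_exp x oo (deg_exp_fps l - 1)) n"

definition deg_bernoulli :: "nat \<Rightarrow> real \<Rightarrow> real" where
  "deg_bernoulli n m = fact n * fps_nth (fps_X / (deg_exp_fps m - 1)) n"

end

theory Submission imports Defs "HOL-Probability.Probability" begin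

lemma int_pow_exp:
  fixes i :: nat
  shows "((\<lambda>x::real. exp (-2*x) * x^i) has_integral (fact i / 2^(i+1))) {0..}"
proof -
  define f where "f x = erlang_density 0 2 x * x ^ i" for x :: real
  have nn: "(\<integral>\<^sup>+ x. ennreal (f x) \<partial>lborel) = ennreal (fact i / 2^i)"
    unfolding f_def using nn_integral_erlang_ith_moment[of 2 0 i]
    by (simp add: ennreal_divide_eq_top_iff ennreal_power divide_ennreal)
  have HI: "(f has_integral (fact i / 2^i)) UNIV"
  proof (rule nn_integral_has_integral[OF _ _ nn])
    show "f \<in> borel_measurable borel" unfolding f_def by measurable
    show "0 \<le> f x" for x unfolding f_def erlang_density_def by simp
  qed simp
  have FE: "f = (\<lambda>x. if x \<in> {0..} then 2 * (exp (-2*x) * x^i) else 0)"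
    by (auto simp: f_def erlang_density_def fun_eq_iff)
  have "((\<lambda>x::real. 2 * (exp (-2*x) * x^i)) has_integral (fact i / 2^i)) {0..}"
    by (rule iffD1[OF has_integral_restrict_UNIV]) (simp only: FE[symmetric] HI)
  from has_integral_mult_right[OF this, of "1/2"] show ?thesis by simp
qed

lemma deg_exp_fps_eq: "deg_exp_fps l = Abs_fps (\<lambda>n. l^n * ((1/l) gchoose n))"
  unfolding deg_exp_fps_def by (simp add: fps_compose_linear)

lemma E0: "fps_nth (deg_exp_fps l) 0 = 1" by (simp add: deg_exp_fps_eq)
lemma E1: "l \<noteq> 0 \<Longrightarrow> fps_nth (deg_exp_fps l) 1 = 1" by (simp add: deg_exp_fps_eq)

lemma E_half: "l \<noteq> 0 \<Longrightarrow> deg_exp_fps (l/2) oo (fps_const 2 * fps_X) = deg_exp_fps l * deg_exp_fps l"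
proof -
  have "fps_binomial (2/l) = fps_binomial (1/l) * fps_binomial (1/l)"
    using fps_binomial_add_mult[of "1/l" "1/l"] by simp
  then have "deg_exp_fps l * deg_exp_fps l = fps_binomial (2/l) oo (fps_const l * fps_X)"
    unfolding deg_exp_fps_def by (simp add: fps_compose_mult_distrib)
  also have "\<dots> = Abs_fps (\<lambda>n. l^n * ((2/l) gchoose n))" by (simp add: fps_compose_linear)
  also have "\<dots> = deg_exp_fps (l/2) oo (fps_const 2 * fps_X)"
    by (simp add: fps_compose_linear deg_exp_fps_def fps_eq_iff power_mult_distrib[symmetric])
  finally show ?thesis ..
qed

lemma coeff_inv:
  fixes D :: "real fps" assumes D0: "fps_nth D 0 = 0"
  shows "(\<Sum>i=0..n. (-1)^i / 2^(i+1) * fps_nth (D^i) n) = fps_nth (inverse (fps_const 2 + D)) n"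
proof -
  define F :: "real fps" where "F = Abs_fps (\<lambda>i. (-1)^i / 2^(i+1))"
  have "(fps_const 2 + fps_X) * F = 1"
  proof (rule fps_ext)
    fix m :: nat
    show "fps_nth ((fps_const 2 + fps_X) * F) m = fps_nth 1 m"
      by (cases m) (simp_all add: F_def distrib_right)
  qed
  hence "inverse (fps_const 2 + fps_X) = F" by (rule fps_inverse_unique)
  hence "F oo D = inverse ((fps_const 2 + fps_X) oo D)"
    using fps_inverse_compose[OF D0, of "fps_const 2 + fps_X"] by simp
  also have "(fps_const 2 + fps_X) oo D = fps_const 2 + D"
    by (simp add: fps_compose_add_distrib D0)
  finally have "fps_nth (F oo D) n = fps_nth (inverse (fps_const 2 + D)) n" by simp
  then show ?thesis unfolding fps_compose_nth F_def by simp
qed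
lemma bern_part:
  assumes l: "l \<noteq> 0"
  shows "(deg_bernoulli (n + 1) l - 2 ^ (n + 1) * deg_bernoulli (n + 1) (l / 2)) / real (n + 1)
         = fact n * fps_nth (inverse (fps_const 2 + (deg_exp_fps l - 1))) n"
proof -
  define E where "E = deg_exp_fps l"
  define E2 where "E2 = deg_exp_fps (l/2)"
  define B1 :: "real fps" where "B1 = fps_X / (E - 1)"
  define B2 :: "real fps" where "B2 = fps_X / (E2 - 1)"
  define C where "C = B2 oo (fps_const 2 * fps_X)"
  have c1: "fps_nth (E - 1) 1 = 1" using E1[OF l] by (simp add: E_def)
  have c2: "fps_nth (E2 - 1) 1 = 1" using E1[of "l/2"] l by (simp add: E2_def)
  have E1ne: "E - 1 \<noteq> 0" using c1 by auto
  have E2ne: "E2 - 1 \<noteq> 0" using c2 by auto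
  have s1: "subdegree (E - 1) \<le> subdegree (fps_X::real fps)" using c1 by (simp add: subdegree_leI)
  have s2: "subdegree (E2 - 1) \<le> subdegree (fps_X::real fps)" using c2 by (simp add: subdegree_leI)
  have hB1: "B1 * (E - 1) = fps_X" unfolding B1_def by (rule fps_times_divide_eq[OF E1ne s1])
  have hB2: "B2 * (E2 - 1) = fps_X" unfolding B2_def by (rule fps_times_divide_eq[OF E2ne s2])
  have "(B2 * (E2 - 1)) oo (fps_const 2 * fps_X) = C * (E * E - 1)"
    by (simp add: fps_compose_mult_distrib fps_compose_sub_distrib C_def E2_def E_def E_half[OF l])
  then have hC: "C * (E * E - 1) = fps_const 2 * fps_X"
    using hB2 by (simp add: fps_X_fps_compose_startby0)
  have "(B1 - C) * (E + 1) * (E - 1) = B1 * (E - 1) * (E + 1) - C * (E * E - 1)"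
    by (simp add: algebra_simps)
  also have "\<dots> = fps_X * (E + 1) - fps_const 2 * fps_X" using hB1 hC by simp
  also have "\<dots> = fps_X * (E - 1)"
    by (simp add: algebra_simps fps_eq_iff)
  finally have "((B1 - C) * (E + 1) - fps_X) * (E - 1) = 0" by (simp add: algebra_simps)
  then have h3: "(B1 - C) * (E + 1) = fps_X" using E1ne by simp
  have E0': "fps_nth (E + 1) 0 \<noteq> 0" by (simp add: E_def E0)
  have "B1 - C = (B1 - C) * (E + 1) * inverse (E + 1)"
    using inverse_mult_eq_1'[OF E0'] by (simp add: mult.assoc)
  also have "\<dots> = fps_X * inverse (E + 1)" using h3 by simp
  finally have h4: "B1 - C = fps_X * inverse (E + 1)" .
  have EQ: "fps_const 2 + (E - 1) = E + 1" by (simp add: fps_eq_iff)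
  have R: "fps_nth (inverse (fps_const 2 + (deg_exp_fps l - 1))) n = fps_nth (B1 - C) (n+1)"
    unfolding E_def[symmetric] EQ h4 by simp
  have cC: "fps_nth C (n+1) = 2^(n+1) * fps_nth B2 (n+1)"
    by (simp add: C_def fps_compose_linear)
  have b1: "deg_bernoulli (n + 1) l = fact (n+1) * fps_nth B1 (n+1)"
    by (simp add: deg_bernoulli_def B1_def E_def)
  have b2: "deg_bernoulli (n + 1) (l/2) = fact (n+1) * fps_nth B2 (n+1)"
    by (simp add: deg_bernoulli_def B2_def E2_def)
  show ?thesis unfolding R b1 b2 using cC
    by (simp add: field_simps fact_Suc)
qed

lemma bell_eq: "deg_bell n l (-x) = fact n * (\<Sum>i=0..n. (-x)^i / fact i * fps_nth ((deg_exp_fps l - 1)^i) n)"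
  by (simp add: deg_bell_def fps_compose_nth)


lemma term_eq: "exp (-2*x) * x^i * (fact n * (-1)^i / fact i * d) = exp (-2 * x) * (fact n * ((-x)^i / fact i * d))" for x d :: real
proof -
  have "(-x)^i = (-1)^i * x^i" by (rule power_minus)
  then show ?thesis by (simp only: times_divide_eq_right times_divide_eq_left mult.assoc mult.left_commute)
qed

theorem theorem12:
  fixes l :: real and n :: nat
  assumes "l \<noteq> 0"
  shows "((\<lambda>x. exp (-2 * x) * deg_bell n l (-x)) has_integral
           ((deg_bernoulli (n + 1) l - 2 ^ (n + 1) * deg_bernoulli (n + 1) (l / 2)) / real (n + 1)))
         {0..}"
proof -
  define D where "D = deg_exp_fps l - 1"
  define c where "c i = fact n * (-1)^i / fact i * fps_nth (D^i) n" for i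
  have D0: "fps_nth D 0 = 0" by (simp add: D_def E0)
  have "((\<lambda>x. \<Sum>i=0..n. exp (-2*x) * x^i * c i) has_integral (\<Sum>i=0..n. fact i / 2^(i+1) * c i)) {0..}"
  proof (rule has_integral_sum)
    fix i
    show "((\<lambda>x. exp (-2*x) * x^i * c i) has_integral (fact i / 2^(i+1) * c i)) {0..}"
      by (rule has_integral_mult_left[OF int_pow_exp])
  qed simp
  moreover have "(\<lambda>x. \<Sum>i=0..n. exp (-2*x) * x^i * c i) = (\<lambda>x. exp (-2 * x) * deg_bell n l (-x))"
  proof
    fix x :: real
    show "(\<Sum>i=0..n. exp (-2*x) * x^i * c i) = exp (-2 * x) * deg_bell n l (-x)"
      unfolding bell_eq D_def[symmetric] c_def sum_distrib_left
      by (rule sum.cong) (simp_all only: term_eq)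
  qed
  moreover have "(\<Sum>i=0..n. fact i / 2^(i+1) * c i) = fact n * (\<Sum>i=0..n. (-1)^i / 2^(i+1) * fps_nth (D^i) n)"
    unfolding c_def sum_distrib_left by (rule sum.cong) simp_all
  moreover have "\<dots> = (deg_bernoulli (n + 1) l - 2 ^ (n + 1) * deg_bernoulli (n + 1) (l / 2)) / real (n + 1)"
    using coeff_inv[OF D0, of n] bern_part[OF assms, of n] unfolding D_def by simp
  ultimately show ?thesis by simp
qed

end
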